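(* Let $G$ be a finite simple connected graph other than $K_2$ and let $U$ be a set of leaves of $G$. Then there exists a set $V$ of leaves of $\rho\circ\lambda(G)$ such that \[ \rho\circ\lambda\circ\rho\circ\lambda_U(G)=\rho\circ\lambda_V\circ\rho\circ\lambda(G). \]
   Context: A leaf is a vertex of degree one; two distinct vertices are siblings if they have the same closed neighborhood $N[v]=\{v\}\cup N(v)$. For a graph $G$ other than $K_2$ and a set $S$ of leaves of $G$, $\lambda_S(G)$ is the graph obtained by removing the vertices in $S$; $\lambda(G)$ denotes the graph obtained by removing all leaves of $G$. $\rho(G)$ is the graph obtained from $G$ by contracting each maximal group of siblings to a single vertex (adjacent to the common outside neighbors of the group). Equalities of graphs are understood up to the natural identification of vertices (i.e. as isomorphic graphs). *)

theory Defs
  imports Main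
begin

type_synonym 'a graph = "'a set \<times> ('a \<times> 'a) set"

definition verts :: "'a graph \<Rightarrow> 'a set" where
  "verts G = fst G"

definition edges :: "'a graph \<Rightarrow> ('a \<times> 'a) set" where
  "edges G = snd G"

definition simple_graph :: "'a graph \<Rightarrow> bool" where
  "simple_graph G \<longleftrightarrow> finite (verts G) \<and> edges G \<subseteq> verts G \<times> verts G
     \<and> sym (edges G) \<and> (\<forall>v. (v, v) \<notin> edges G)"

definition connected_graph :: "'a graph \<Rightarrow> bool" where
  "connected_graph G \<longleftrightarrow> verts G \<noteq> {} \<and>
     (\<forall>u \<in> verts G. \<forall>v \<in> verts G. (u, v) \<in> (edges G)\<^sup>*)"

definition is_K2 :: "'a graph \<Rightarrow> bool" where
  "is_K2 G \<longleftrightarrow> card (verts G) = 2 \<and>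
     (\<forall>u \<in> verts G. \<forall>v \<in> verts G. u \<noteq> v \<longrightarrow> (u, v) \<in> edges G)"

definition nbrs :: "'a graph \<Rightarrow> 'a \<Rightarrow> 'a set" where
  "nbrs G v = {u. (v, u) \<in> edges G}"

definition closed_nbrs :: "'a graph \<Rightarrow> 'a \<Rightarrow> 'a set" where
  "closed_nbrs G v = insert v (nbrs G v)"

definition is_leaf :: "'a graph \<Rightarrow> 'a \<Rightarrow> bool" where
  "is_leaf G v \<longleftrightarrow> v \<in> verts G \<and> card (nbrs G v) = 1"

definition leaves :: "'a graph \<Rightarrow> 'a set" where
  "leaves G = {v. is_leaf G v}"

definition lambda_S :: "'a set \<Rightarrow> 'a graph \<Rightarrow> 'a graph" where
  "lambda_S S G = (verts G - S, edges G \<inter> ((verts G - S) \<times> (verts G - S)))"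

definition lambda :: "'a graph \<Rightarrow> 'a graph" where
  "lambda G = lambda_S (leaves G) G"

definition sib_class :: "'a graph \<Rightarrow> 'a \<Rightarrow> 'a set" where
  "sib_class G v = {u \<in> verts G. closed_nbrs G u = closed_nbrs G v}"

definition rho :: "'a graph \<Rightarrow> 'a set graph" where
  "rho G = (sib_class G ` verts G,
            {(C, D). C \<in> sib_class G ` verts G \<and> D \<in> sib_class G ` verts G \<and> C \<noteq> D
                     \<and> (\<exists>u \<in> C. \<exists>w \<in> D. (u, w) \<in> edges G)})"

definition graph_iso :: "'a graph \<Rightarrow> 'b graph \<Rightarrow> bool" where
  "graph_iso G H \<longleftrightarrow> (\<exists>f. bij_betw f (verts G) (verts H) \<and>
     (\<forall>u \<in> verts G. \<forall>v \<in> verts G. (u, v) \<in> edges G \<longleftrightarrow> (f u, f v) \<in> edges H))"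

end

theory Submission
  imports Defs
begin


definition gwf :: "'a graph \<Rightarrow> bool" where
  "gwf G \<longleftrightarrow> edges G \<subseteq> verts G \<times> verts G \<and> sym (edges G)"

lemma verts_lambda_S[simp]: "verts (lambda_S S G) = verts G - S"
  by (simp add: lambda_S_def verts_def)
lemma edges_lambda_S[simp]: "edges (lambda_S S G) = edges G \<inter> ((verts G - S) \<times> (verts G - S))"
  by (simp add: lambda_S_def verts_def edges_def)
lemma verts_rho[simp]: "verts (rho G) = sib_class G ` verts G"
  by (simp add: rho_def verts_def)
lemma edges_rho: "edges (rho G) = {(C, D). C \<in> sib_class G ` verts G \<and> D \<in> sib_class G ` verts G \<and> C \<noteq> D
                     \<and> (\<exists>u \<in> C. \<exists>w \<in> D. (u, w) \<in> edges G)}"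
  by (simp add: rho_def edges_def)

lemma mem_cn: "u \<in> closed_nbrs G v \<longleftrightarrow> u = v \<or> (v, u) \<in> edges G"
  by (auto simp: closed_nbrs_def nbrs_def)

lemma sib_mem: "u \<in> sib_class G v \<longleftrightarrow> u \<in> verts G \<and> closed_nbrs G u = closed_nbrs G v"
  by (simp add: sib_class_def)

lemma sib_eq: "u \<in> verts G \<Longrightarrow> sib_class G u = sib_class G v \<longleftrightarrow> closed_nbrs G u = closed_nbrs G v"
  unfolding sib_class_def by blast

lemma sib_self: "u \<in> verts G \<Longrightarrow> u \<in> sib_class G u"
  by (simp add: sib_mem)

lemma gwf_symD: "gwf G \<Longrightarrow> (u, v) \<in> edges G \<Longrightarrow> (v, u) \<in> edges G"
  unfolding gwf_def sym_def by blast

lemma gwf_vD: "gwf G \<Longrightarrow> (u, v) \<in> edges G \<Longrightarrow> u \<in> verts G \<and> v \<in> verts G"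
  unfolding gwf_def by blast

lemma cn_sub: "gwf G \<Longrightarrow> v \<in> verts G \<Longrightarrow> closed_nbrs G v \<subseteq> verts G"
  using gwf_vD by (fastforce simp: mem_cn)

lemma gwf_lambda_S: "gwf G \<Longrightarrow> gwf (lambda_S S G)"
  unfolding gwf_def sym_def by auto

lemma gwf_rho: "gwf G \<Longrightarrow> gwf (rho G)"
  unfolding gwf_def sym_def by (auto simp: edges_rho; blast)

lemma cn_lambda_S: "v \<in> verts G - S \<Longrightarrow> closed_nbrs (lambda_S S G) v = closed_nbrs G v \<inter> (verts G - S)"
  by (auto simp: mem_cn)

lemma rho_edge:
  assumes "gwf G" "u \<in> verts G" "v \<in> verts G"
  shows "(sib_class G u, sib_class G v) \<in> edges (rho G) \<longleftrightarrow>
         closed_nbrs G u \<noteq> closed_nbrs G v \<and> (u, v) \<in> edges G"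
proof
  assume h: "(sib_class G u, sib_class G v) \<in> edges (rho G)"
  then have ne: "sib_class G u \<noteq> sib_class G v" by (simp add: edges_rho)
  then have cne: "closed_nbrs G u \<noteq> closed_nbrs G v" using sib_eq assms by metis
  from h obtain a w where a: "a \<in> sib_class G u" and w: "w \<in> sib_class G v" and aw: "(a, w) \<in> edges G"
    by (auto simp: edges_rho)
  have ca: "closed_nbrs G a = closed_nbrs G u" and cw: "closed_nbrs G w = closed_nbrs G v"
    using a w by (auto simp: sib_mem)
  have "w \<in> closed_nbrs G u" using ca aw by (metis mem_cn)
  then have "w = u \<or> (u, w) \<in> edges G" by (simp add: mem_cn)
  then have uw: "(u, w) \<in> edges G" using cw cne by auto
  then have "u \<in> closed_nbrs G v" using cw gwf_symD[OF assms(1)] by (metis mem_cn)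
  then have "u = v \<or> (v, u) \<in> edges G" by (simp add: mem_cn)
  then show "closed_nbrs G u \<noteq> closed_nbrs G v \<and> (u, v) \<in> edges G"
    using cne gwf_symD[OF assms(1)] by auto
next
  assume h: "closed_nbrs G u \<noteq> closed_nbrs G v \<and> (u, v) \<in> edges G"
  then have "sib_class G u \<noteq> sib_class G v" using sib_eq assms by metis
  then show "(sib_class G u, sib_class G v) \<in> edges (rho G)"
    using h assms sib_self[of u G] sib_self[of v G] by (auto simp: edges_rho)
qed


lemma graph_iso_sym: assumes "graph_iso G H" shows "graph_iso H G"
proof -
  from assms obtain f where f: "bij_betw f (verts G) (verts H)"
    and e: "\<forall>u \<in> verts G. \<forall>v \<in> verts G. (u, v) \<in> edges G \<longleftrightarrow> (f u, f v) \<in> edges H"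
    unfolding graph_iso_def by blast
  let ?g = "inv_into (verts G) f"
  have g: "bij_betw ?g (verts H) (verts G)" using f by (rule bij_betw_inv_into)
  have "\<forall>u \<in> verts H. \<forall>v \<in> verts H. (u, v) \<in> edges H \<longleftrightarrow> (?g u, ?g v) \<in> edges G"
  proof (intro ballI)
    fix u v assume u: "u \<in> verts H" and v: "v \<in> verts H"
    have "?g u \<in> verts G" "?g v \<in> verts G" using g u v bij_betwE by blast+
    moreover have "f (?g u) = u" "f (?g v) = v" using f u v by (meson bij_betw_inv_into_right)+
    ultimately show "(u, v) \<in> edges H \<longleftrightarrow> (?g u, ?g v) \<in> edges G" using e by metis
  qed
  then show ?thesis using g unfolding graph_iso_def by blast
qed

lemma graph_iso_trans: assumes "graph_iso G H" "graph_iso H K" shows "graph_iso G K"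
proof -
  from assms(1) obtain f where f: "bij_betw f (verts G) (verts H)"
    and e: "\<forall>u \<in> verts G. \<forall>v \<in> verts G. (u, v) \<in> edges G \<longleftrightarrow> (f u, f v) \<in> edges H"
    unfolding graph_iso_def by blast
  from assms(2) obtain g where g: "bij_betw g (verts H) (verts K)"
    and e2: "\<forall>u \<in> verts H. \<forall>v \<in> verts H. (u, v) \<in> edges H \<longleftrightarrow> (g u, g v) \<in> edges K"
    unfolding graph_iso_def by blast
  have "bij_betw (g \<circ> f) (verts G) (verts K)" using f g by (rule bij_betw_trans)
  moreover have "\<forall>u \<in> verts G. \<forall>v \<in> verts G. (u, v) \<in> edges G \<longleftrightarrow> ((g \<circ> f) u, (g \<circ> f) v) \<in> edges K"
    using e e2 f by (simp add: bij_betw_def) blast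
  ultimately show ?thesis unfolding graph_iso_def by blast
qed

lemma rho_iso_map:
  assumes Y: "gwf Y" and Z: "gwf Z" and surj: "f ` verts Y = verts Z"
    and adj: "\<And>u v. u \<in> verts Y \<Longrightarrow> v \<in> verts Y \<Longrightarrow>
        (u = v \<or> (u, v) \<in> edges Y) \<longleftrightarrow> (f u = f v \<or> (f u, f v) \<in> edges Z)"
  shows "graph_iso (rho Y) (rho Z)"
proof -
  have cnY: "closed_nbrs Y u = {v \<in> verts Y. f v \<in> closed_nbrs Z (f u)}" if u: "u \<in> verts Y" for u
  proof (intro set_eqI iffI)
    fix v assume v: "v \<in> closed_nbrs Y u"
    then have vv: "v \<in> verts Y" using cn_sub[OF Y u] by blast
    from v have "u = v \<or> (u, v) \<in> edges Y" by (auto simp: mem_cn)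
    then have "f u = f v \<or> (f u, f v) \<in> edges Z" using adj[OF u vv] by blast
    then show "v \<in> {v \<in> verts Y. f v \<in> closed_nbrs Z (f u)}" using vv by (auto simp: mem_cn)
  next
    fix v assume "v \<in> {v \<in> verts Y. f v \<in> closed_nbrs Z (f u)}"
    then have vv: "v \<in> verts Y" and "f u = f v \<or> (f u, f v) \<in> edges Z" by (auto simp: mem_cn)
    then have "u = v \<or> (u, v) \<in> edges Y" using adj[OF u vv] by blast
    then show "v \<in> closed_nbrs Y u" by (auto simp: mem_cn)
  qed
  have fv: "f u \<in> verts Z" if "u \<in> verts Y" for u using surj that by blast
  have tw: "closed_nbrs Y u = closed_nbrs Y v \<longleftrightarrow> closed_nbrs Z (f u) = closed_nbrs Z (f v)"
    if u: "u \<in> verts Y" and v: "v \<in> verts Y" for u v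
  proof
    assume h: "closed_nbrs Y u = closed_nbrs Y v"
    have "closed_nbrs Z (f u) \<subseteq> closed_nbrs Z (f v)" if u: "u \<in> verts Y" and v: "v \<in> verts Y"
      and h: "closed_nbrs Y u = closed_nbrs Y v" for u v
    proof
      fix w assume w: "w \<in> closed_nbrs Z (f u)"
      then have "w \<in> verts Z" using cn_sub[OF Z fv[OF u]] by blast
      then obtain y where y: "y \<in> verts Y" "w = f y" using surj by blast
      then have "y \<in> closed_nbrs Y u" using cnY[OF u] w by blast
      then have "y \<in> closed_nbrs Y v" using h by simp
      then show "w \<in> closed_nbrs Z (f v)" using cnY[OF v] y by blast
    qed
    then show "closed_nbrs Z (f u) = closed_nbrs Z (f v)" using u v h by blast
  next
    assume "closed_nbrs Z (f u) = closed_nbrs Z (f v)"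
    then show "closed_nbrs Y u = closed_nbrs Y v" using cnY[OF u] cnY[OF v] by simp
  qed
  have img: "f ` sib_class Y u = sib_class Z (f u)" if u: "u \<in> verts Y" for u
  proof (intro set_eqI iffI)
    fix w assume "w \<in> f ` sib_class Y u"
    then obtain y where y: "y \<in> sib_class Y u" "w = f y" by blast
    then show "w \<in> sib_class Z (f u)" using tw[OF _ u, of y] fv by (auto simp: sib_mem)
  next
    fix w assume w: "w \<in> sib_class Z (f u)"
    then have "w \<in> verts Z" by (simp add: sib_mem)
    then obtain y where y: "y \<in> verts Y" "w = f y" using surj by blast
    then show "w \<in> f ` sib_class Y u" using tw[OF y(1) u] w by (auto simp: sib_mem)
  qed
  have bij: "bij_betw (image f) (verts (rho Y)) (verts (rho Z))"
  proof (rule bij_betw_imageI)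
    show "inj_on (image f) (verts (rho Y))"
    proof (rule inj_onI)
      fix C D assume C: "C \<in> verts (rho Y)" and D: "D \<in> verts (rho Y)" and e: "f ` C = f ` D"
      from C obtain u where u: "u \<in> verts Y" "C = sib_class Y u" by auto
      from D obtain v where v: "v \<in> verts Y" "D = sib_class Y v" by auto
      have "sib_class Z (f u) = sib_class Z (f v)" using e img u v by simp
      then have "closed_nbrs Z (f u) = closed_nbrs Z (f v)" using sib_eq fv u v by metis
      then have "closed_nbrs Y u = closed_nbrs Y v" using tw u v by blast
      then show "C = D" using u v sib_eq by metis
    qed
    show "image f ` verts (rho Y) = verts (rho Z)"
    proof -
      have "image f ` verts (rho Y) = (\<lambda>u. sib_class Z (f u)) ` verts Y"
        using img by (auto simp: image_image)
      also have "\<dots> = sib_class Z ` verts Z" using surj by (auto simp: image_image[symmetric])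
      finally show ?thesis by simp
    qed
  qed
  have edg: "\<forall>C \<in> verts (rho Y). \<forall>D \<in> verts (rho Y). (C, D) \<in> edges (rho Y) \<longleftrightarrow> (f ` C, f ` D) \<in> edges (rho Z)"
  proof (intro ballI)
    fix C D assume C: "C \<in> verts (rho Y)" and D: "D \<in> verts (rho Y)"
    from C obtain u where u: "u \<in> verts Y" "C = sib_class Y u" by auto
    from D obtain v where v: "v \<in> verts Y" "D = sib_class Y v" by auto
    have "(C, D) \<in> edges (rho Y) \<longleftrightarrow> closed_nbrs Y u \<noteq> closed_nbrs Y v \<and> (u, v) \<in> edges Y"
      using rho_edge[OF Y u(1) v(1)] u v by simp
    also have "\<dots> \<longleftrightarrow> closed_nbrs Z (f u) \<noteq> closed_nbrs Z (f v) \<and> (f u, f v) \<in> edges Z"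
      using tw[OF u(1) v(1)] adj[OF u(1) v(1)] by auto
    also have "\<dots> \<longleftrightarrow> (f ` C, f ` D) \<in> edges (rho Z)"
      using rho_edge[OF Z fv[OF u(1)] fv[OF v(1)]] img u v by simp
    finally show "(C, D) \<in> edges (rho Y) \<longleftrightarrow> (f ` C, f ` D) \<in> edges (rho Z)" .
  qed
  show ?thesis unfolding graph_iso_def using bij edg by blast
qed


lemma cn_sym: "gwf G \<Longrightarrow> x \<in> closed_nbrs G y \<longleftrightarrow> y \<in> closed_nbrs G x"
  using gwf_symD by (metis mem_cn)

lemma verts_pair[simp]: "verts (A, F) = A" and edges_pair[simp]: "edges (A, F) = F"
  by (simp_all add: verts_def edges_def)

lemma rho_proj:
  assumes Y: "gwf Y" and S: "S \<subseteq> verts (rho Y)"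
  shows "graph_iso (rho (lambda_S S (rho Y))) (rho (lambda_S (\<Union>S) Y))"
proof -
  have mem: "sib_class Y u \<notin> S" if "u \<in> verts Y - \<Union>S" for u
    using that sib_self[of u Y] by blast
  have "graph_iso (rho (lambda_S (\<Union>S) Y)) (rho (lambda_S S (rho Y)))"
  proof (rule rho_iso_map[where f = "sib_class Y"])
    show "gwf (lambda_S (\<Union> S) Y)" "gwf (lambda_S S (rho Y))"
      using Y by (auto intro: gwf_lambda_S gwf_rho)
    show "sib_class Y ` verts (lambda_S (\<Union> S) Y) = verts (lambda_S S (rho Y))"
    proof (intro set_eqI iffI)
      fix C assume "C \<in> sib_class Y ` verts (lambda_S (\<Union> S) Y)"
      then show "C \<in> verts (lambda_S S (rho Y))" using mem by auto
    next
      fix C assume C: "C \<in> verts (lambda_S S (rho Y))"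
      then obtain u where u: "u \<in> verts Y" "C = sib_class Y u" "C \<notin> S" by auto
      have "u \<notin> \<Union>S"
      proof
        assume "u \<in> \<Union>S"
        then obtain C' where C': "C' \<in> S" "u \<in> C'" by blast
        then obtain v where v: "v \<in> verts Y" "C' = sib_class Y v" using S by auto
        then have "closed_nbrs Y u = closed_nbrs Y v" using C' by (simp add: sib_mem)
        then have "C = C'" using u v sib_eq by metis
        then show False using u C' by simp
      qed
      then show "C \<in> sib_class Y ` verts (lambda_S (\<Union> S) Y)" using u by auto
    qed
    fix u v assume u: "u \<in> verts (lambda_S (\<Union> S) Y)" and v: "v \<in> verts (lambda_S (\<Union> S) Y)"
    have uY: "u \<in> verts Y" and vY: "v \<in> verts Y" using u v by auto
    have mu: "sib_class Y u \<in> verts (rho Y) - S" and mv: "sib_class Y v \<in> verts (rho Y) - S"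
      using u v mem by auto
    have "(u = v \<or> (u, v) \<in> edges Y) \<longleftrightarrow>
          (sib_class Y u = sib_class Y v \<or> (sib_class Y u, sib_class Y v) \<in> edges (rho Y))"
    proof -
      have "(sib_class Y u = sib_class Y v \<or> (sib_class Y u, sib_class Y v) \<in> edges (rho Y))
          \<longleftrightarrow> closed_nbrs Y u = closed_nbrs Y v \<or> (u, v) \<in> edges Y"
        using rho_edge[OF Y uY vY] sib_eq[OF uY, of v] by blast
      moreover have "u = v \<or> (u, v) \<in> edges Y" if "closed_nbrs Y u = closed_nbrs Y v"
      proof -
        have "v \<in> closed_nbrs Y v" by (simp add: mem_cn)
        then have "v \<in> closed_nbrs Y u" using that by simp
        then show ?thesis by (auto simp: mem_cn)
      qed
      ultimately show ?thesis by blast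
    qed
    then show "(u = v \<or> (u, v) \<in> edges (lambda_S (\<Union> S) Y)) \<longleftrightarrow>
          (sib_class Y u = sib_class Y v \<or> (sib_class Y u, sib_class Y v) \<in> edges (lambda_S S (rho Y)))"
      using u v mu mv by auto
  qed
  then show ?thesis by (rule graph_iso_sym)
qed

lemma rho_retract:
  assumes Y: "gwf Y" and A: "A \<subseteq> verts Y"
    and tw: "\<And>b. b \<in> verts Y - A \<Longrightarrow> \<exists>a \<in> A. closed_nbrs Y a = closed_nbrs Y b"
  shows "graph_iso (rho Y) (rho (A, edges Y \<inter> (A \<times> A)))"
proof -
  define f where "f b = (if b \<in> A then b else (SOME a. a \<in> A \<and> closed_nbrs Y a = closed_nbrs Y b))" for b
  have fA: "f b \<in> A \<and> closed_nbrs Y (f b) = closed_nbrs Y b" if "b \<in> verts Y" for b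
  proof (cases "b \<in> A")
    case True then show ?thesis by (simp add: f_def)
  next
    case False
    then have "\<exists>a. a \<in> A \<and> closed_nbrs Y a = closed_nbrs Y b" using tw that by blast
    from someI_ex[OF this] have "(SOME a. a \<in> A \<and> closed_nbrs Y a = closed_nbrs Y b) \<in> A \<and>
      closed_nbrs Y (SOME a. a \<in> A \<and> closed_nbrs Y a = closed_nbrs Y b) = closed_nbrs Y b" .
    moreover have "f b = (SOME a. a \<in> A \<and> closed_nbrs Y a = closed_nbrs Y b)" using False by (simp add: f_def)
    ultimately show ?thesis by simp
  qed
  show ?thesis
  proof (rule rho_iso_map[where f = f])
    show "gwf Y" by fact
    show "gwf (A, edges Y \<inter> A \<times> A)" using Y unfolding gwf_def sym_def by auto
    show "f ` verts Y = verts (A, edges Y \<inter> A \<times> A)"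
    proof (intro set_eqI iffI)
      fix x assume "x \<in> f ` verts Y" then show "x \<in> verts (A, edges Y \<inter> A \<times> A)" using fA by auto
    next
      fix x assume "x \<in> verts (A, edges Y \<inter> A \<times> A)"
      then have "x \<in> A" by simp
      moreover have "f x = x" using \<open>x \<in> A\<close> by (simp add: f_def)
      ultimately show "x \<in> f ` verts Y" using A by (metis image_eqI subsetD)
    qed
    fix u v assume u: "u \<in> verts Y" and v: "v \<in> verts Y"
    have "(u = v \<or> (u, v) \<in> edges Y) \<longleftrightarrow> v \<in> closed_nbrs Y u" by (auto simp: mem_cn)
    also have "\<dots> \<longleftrightarrow> v \<in> closed_nbrs Y (f u)" using fA[OF u] by simp
    also have "\<dots> \<longleftrightarrow> f u \<in> closed_nbrs Y v" using cn_sym[OF Y] by blast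
    also have "\<dots> \<longleftrightarrow> f u \<in> closed_nbrs Y (f v)" using fA[OF v] by simp
    also have "\<dots> \<longleftrightarrow> f v \<in> closed_nbrs Y (f u)" using cn_sym[OF Y] by blast
    also have "\<dots> \<longleftrightarrow> (f u = f v \<or> (f u, f v) \<in> edges Y)" by (auto simp: mem_cn)
    also have "\<dots> \<longleftrightarrow> (f u = f v \<or> (f u, f v) \<in> edges (A, edges Y \<inter> A \<times> A))"
      using fA[OF u] fA[OF v] by auto
    finally show "(u = v \<or> (u, v) \<in> edges Y) \<longleftrightarrow> (f u = f v \<or> (f u, f v) \<in> edges (A, edges Y \<inter> A \<times> A))" .
  qed
qed

lemma leaf_class_iff:
  assumes G: "gwf G" and b: "b \<in> verts G"
  shows "is_leaf (rho G) (sib_class G b) \<longleftrightarrow>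
    (\<exists>d \<in> verts G. (b, d) \<in> edges G \<and> closed_nbrs G d \<noteq> closed_nbrs G b \<and>
       (\<forall>y \<in> verts G. (b, y) \<in> edges G \<and> closed_nbrs G y \<noteq> closed_nbrs G b \<longrightarrow>
            closed_nbrs G y = closed_nbrs G d))"
proof -
  have nb: "nbrs (rho G) (sib_class G b) =
      sib_class G ` {y \<in> verts G. (b, y) \<in> edges G \<and> closed_nbrs G y \<noteq> closed_nbrs G b}"
  proof (intro set_eqI iffI)
    fix D assume "D \<in> nbrs (rho G) (sib_class G b)"
    then have D: "(sib_class G b, D) \<in> edges (rho G)" by (simp add: nbrs_def)
    then obtain y where y: "y \<in> verts G" "D = sib_class G y" by (auto simp: edges_rho)
    then show "D \<in> sib_class G ` {y \<in> verts G. (b, y) \<in> edges G \<and> closed_nbrs G y \<noteq> closed_nbrs G b}"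
      using rho_edge[OF G b y(1)] D by auto
  next
    fix D assume "D \<in> sib_class G ` {y \<in> verts G. (b, y) \<in> edges G \<and> closed_nbrs G y \<noteq> closed_nbrs G b}"
    then obtain y where y: "y \<in> verts G" "D = sib_class G y" "(b, y) \<in> edges G"
      "closed_nbrs G y \<noteq> closed_nbrs G b" by auto
    then show "D \<in> nbrs (rho G) (sib_class G b)"
      using rho_edge[OF G b y(1)] by (auto simp: nbrs_def)
  qed
  have "is_leaf (rho G) (sib_class G b) \<longleftrightarrow>
      (\<exists>D. sib_class G ` {y \<in> verts G. (b, y) \<in> edges G \<and> closed_nbrs G y \<noteq> closed_nbrs G b} = {D})"
    using b by (simp add: is_leaf_def nb card_1_singleton_iff)
  also have "\<dots> \<longleftrightarrow> (\<exists>d \<in> verts G. (b, d) \<in> edges G \<and> closed_nbrs G d \<noteq> closed_nbrs G b \<and>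
       (\<forall>y \<in> verts G. (b, y) \<in> edges G \<and> closed_nbrs G y \<noteq> closed_nbrs G b \<longrightarrow>
            closed_nbrs G y = closed_nbrs G d))"
  proof
    assume "\<exists>D. sib_class G ` {y \<in> verts G. (b, y) \<in> edges G \<and> closed_nbrs G y \<noteq> closed_nbrs G b} = {D}"
    then obtain D where D: "sib_class G ` {y \<in> verts G. (b, y) \<in> edges G \<and> closed_nbrs G y \<noteq> closed_nbrs G b} = {D}" by blast
    have "D \<in> sib_class G ` {y \<in> verts G. (b, y) \<in> edges G \<and> closed_nbrs G y \<noteq> closed_nbrs G b}"
      using D by simp
    then obtain d where d: "d \<in> verts G" "(b, d) \<in> edges G" "closed_nbrs G d \<noteq> closed_nbrs G b" "D = sib_class G d"
      by blast
    show "\<exists>d \<in> verts G. (b, d) \<in> edges G \<and> closed_nbrs G d \<noteq> closed_nbrs G b \<and>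
       (\<forall>y \<in> verts G. (b, y) \<in> edges G \<and> closed_nbrs G y \<noteq> closed_nbrs G b \<longrightarrow>
            closed_nbrs G y = closed_nbrs G d)"
    proof (intro bexI conjI ballI impI)
      fix y assume y: "y \<in> verts G" "(b, y) \<in> edges G \<and> closed_nbrs G y \<noteq> closed_nbrs G b"
      then have "sib_class G y = D" using D by blast
      then show "closed_nbrs G y = closed_nbrs G d" using d y sib_eq by metis
    qed (use d in auto)
  next
    assume "\<exists>d \<in> verts G. (b, d) \<in> edges G \<and> closed_nbrs G d \<noteq> closed_nbrs G b \<and>
       (\<forall>y \<in> verts G. (b, y) \<in> edges G \<and> closed_nbrs G y \<noteq> closed_nbrs G b \<longrightarrow>
            closed_nbrs G y = closed_nbrs G d)"
    then obtain d where d: "d \<in> verts G" "(b, d) \<in> edges G" "closed_nbrs G d \<noteq> closed_nbrs G b"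
      and all: "\<forall>y \<in> verts G. (b, y) \<in> edges G \<and> closed_nbrs G y \<noteq> closed_nbrs G b \<longrightarrow>
            closed_nbrs G y = closed_nbrs G d" by blast
    have "sib_class G ` {y \<in> verts G. (b, y) \<in> edges G \<and> closed_nbrs G y \<noteq> closed_nbrs G b} = {sib_class G d}"
    proof (intro set_eqI iffI)
      fix C assume "C \<in> sib_class G ` {y \<in> verts G. (b, y) \<in> edges G \<and> closed_nbrs G y \<noteq> closed_nbrs G b}"
      then obtain y where "y \<in> verts G" "(b, y) \<in> edges G" "closed_nbrs G y \<noteq> closed_nbrs G b" "C = sib_class G y" by auto
      then have "closed_nbrs G y = closed_nbrs G d" "y \<in> verts G" "C = sib_class G y" using all by auto
      then show "C \<in> {sib_class G d}" using sib_eq by (metis singletonI)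
    next
      fix C assume "C \<in> {sib_class G d}" then show "C \<in> sib_class G ` {y \<in> verts G. (b, y) \<in> edges G \<and> closed_nbrs G y \<noteq> closed_nbrs G b}"
        using d by auto
    qed
    then show "\<exists>D. sib_class G ` {y \<in> verts G. (b, y) \<in> edges G \<and> closed_nbrs G y \<noteq> closed_nbrs G b} = {D}" by blast
  qed
  finally show ?thesis .
qed



lemma closed_reach:
  assumes "\<forall>w \<in> T. \<forall>w'. (w, w') \<in> F \<longrightarrow> w' \<in> T" "x \<in> T" "(x, y) \<in> F\<^sup>*"
  shows "y \<in> T"
  using assms(3,2) by (induction rule: rtrancl_induct) (use assms(1) in auto)

lemma card1_rho: assumes "card (verts Y) = 1" shows "card (verts (rho Y)) = 1"
proof -
  from assms obtain y where "verts Y = {y}" by (auto simp: card_1_singleton_iff)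
  then show ?thesis by simp
qed

lemma card1_rho_noleaves: assumes "card (verts (rho Y)) = 1" shows "leaves (rho Y) = {}"
proof -
  from assms obtain C where C: "verts (rho Y) = {C}" by (auto simp: card_1_singleton_iff)
  have "nbrs (rho Y) C = {}"
  proof -
    have "(C, D) \<notin> edges (rho Y)" for D
      using C by (auto simp: edges_rho)
    then show ?thesis by (auto simp: nbrs_def)
  qed
  then show ?thesis using C by (auto simp: leaves_def is_leaf_def)
qed

lemma card1_iso:
  assumes "card (verts (rho Y)) = 1" "card (verts (rho Z)) = 1"
  shows "graph_iso (rho Y) (rho Z)"
proof -
  from assms obtain C D where C: "verts (rho Y) = {C}" and D: "verts (rho Z) = {D}"
    by (auto simp: card_1_singleton_iff)
  have "bij_betw (\<lambda>_. D) (verts (rho Y)) (verts (rho Z))" using C D by (simp add: bij_betw_def)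
  moreover have "(C, C) \<notin> edges (rho Y)" "(D, D) \<notin> edges (rho Z)" by (auto simp: edges_rho)
  ultimately show ?thesis using C D unfolding graph_iso_def by auto
qed

lemma lambda_S_empty: "gwf G \<Longrightarrow> lambda_S {} G = G"
  unfolding lambda_S_def gwf_def verts_def edges_def by (cases G) auto

locale thm_ctx =
  fixes G :: "'a graph" and U :: "'a set"
  assumes sg: "simple_graph G" and conn: "connected_graph G" and nk2: "\<not> is_K2 G"
    and UL: "U \<subseteq> leaves G"
begin

lemma gG: "gwf G" using sg unfolding simple_graph_def gwf_def by blast
lemma irr: "(v, v) \<notin> edges G" using sg unfolding simple_graph_def by blast

lemma leaf_nb: assumes "l \<in> leaves G"
  shows "\<exists>s. nbrs G l = {s} \<and> s \<in> verts G \<and> (l, s) \<in> edges G \<and> s \<noteq> l \<and> l \<in> verts G"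
proof -
  from assms have "card (nbrs G l) = 1" "l \<in> verts G" by (auto simp: leaves_def is_leaf_def)
  then obtain s where s: "nbrs G l = {s}" by (auto simp: card_1_singleton_iff)
  then have e: "(l, s) \<in> edges G" by (auto simp: nbrs_def)
  then show ?thesis using s gwf_vD[OF gG e] irr \<open>l \<in> verts G\<close> by auto
qed

lemma no_adj_leaves:
  assumes l: "l \<in> leaves G" and s: "s \<in> leaves G" and e: "(l, s) \<in> edges G"
  shows False
proof -
  obtain s' where s': "nbrs G l = {s'}" "l \<in> verts G" using leaf_nb[OF l] by blast
  then have ss: "s' = s" using e by (auto simp: nbrs_def)
  obtain l' where l': "nbrs G s = {l'}" "s \<in> verts G" using leaf_nb[OF s] by blast
  have "(s, l) \<in> edges G" using gwf_symD[OF gG e] .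
  then have ll: "l' = l" using l' by (auto simp: nbrs_def)
  have cl: "\<forall>w \<in> {l, s}. \<forall>w'. (w, w') \<in> edges G \<longrightarrow> w' \<in> {l, s}"
    using s' l' ss ll by (auto simp: nbrs_def)
  have "verts G \<subseteq> {l, s}"
  proof
    fix w assume "w \<in> verts G"
    then have "(l, w) \<in> (edges G)\<^sup>*" using conn s'(2) unfolding connected_graph_def by blast
    then show "w \<in> {l, s}" using closed_reach[OF cl] by blast
  qed
  then have V: "verts G = {l, s}" using s'(2) l'(2) by blast
  have "l \<noteq> s" using e irr by blast
  then have "is_K2 G" using V e \<open>(s, l) \<in> edges G\<close> unfolding is_K2_def by auto
  then show False using nk2 by simp
qed

abbreviation "H \<equiv> lambda_S U G"
abbreviation "X \<equiv> lambda G"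

lemma X_def': "X = lambda_S (leaves G) G" by (simp add: lambda_def)

lemma gH: "gwf H" using gG by (rule gwf_lambda_S)
lemma gX: "gwf X" unfolding X_def' using gG by (rule gwf_lambda_S)

lemma degenerate:
  assumes s: "s \<in> verts G - U" and l: "l \<in> leaves G - U" and sl: "s \<noteq> l"
    and cs: "closed_nbrs H s = {s, l}"
  shows "graph_iso (rho (lambda (rho H))) (rho (lambda_S {} (rho X)))"
proof -
  have cs': "closed_nbrs G s \<inter> (verts G - U) = {s, l}" using cs cn_lambda_S[of s G U] s by simp
  have lns: "l \<in> nbrs G s" using cs' sl by (auto simp: mem_cn nbrs_def)
  then have esl: "(s, l) \<in> edges G" by (simp add: nbrs_def)
  have nbL: "nbrs G s \<subseteq> leaves G"
  proof
    fix y assume y: "y \<in> nbrs G s"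
    then have "y \<in> closed_nbrs G s" "y \<in> verts G" using gwf_vD[OF gG] by (auto simp: closed_nbrs_def nbrs_def)
    then have "y \<in> U \<or> y = l \<or> y = s" using cs' by blast
    then show "y \<in> leaves G" using UL l y irr by (auto simp: nbrs_def)
  qed
  have sL: "s \<notin> leaves G" using no_adj_leaves[OF _ _ esl] l by blast
  have cl: "\<forall>w \<in> insert s (nbrs G s). \<forall>w'. (w, w') \<in> edges G \<longrightarrow> w' \<in> insert s (nbrs G s)"
  proof (intro ballI allI impI)
    fix w w' assume w: "w \<in> insert s (nbrs G s)" and e: "(w, w') \<in> edges G"
    show "w' \<in> insert s (nbrs G s)"
    proof (cases "w = s")
      case True then show ?thesis using e by (simp add: nbrs_def)
    next
      case False
      then have wn: "w \<in> nbrs G s" using w by simp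
      then obtain t where t: "nbrs G w = {t}" using leaf_nb nbL by blast
      have "(w, s) \<in> edges G" using wn gwf_symD[OF gG] by (simp add: nbrs_def)
      then have "t = s" "w' = t" using t e by (auto simp: nbrs_def)
      then show ?thesis by simp
    qed
  qed
  have sV: "s \<in> verts G" using s by simp
  have VG: "verts G = insert s (nbrs G s)"
  proof
    show "verts G \<subseteq> insert s (nbrs G s)"
    proof
      fix w assume "w \<in> verts G"
      then have "(s, w) \<in> (edges G)\<^sup>*" using conn sV unfolding connected_graph_def by blast
      then show "w \<in> insert s (nbrs G s)" using closed_reach[OF cl] by blast
    qed
    show "insert s (nbrs G s) \<subseteq> verts G" using sV gwf_vD[OF gG] by (auto simp: nbrs_def)
  qed
  have VH: "verts H = {s, l}"
  proof -
    have "verts H = insert s (nbrs G s) - U" using VG by simp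
    also have "\<dots> = {s, l}"
    proof
      show "insert s (nbrs G s) - U \<subseteq> {s, l}"
      proof
        fix y assume y: "y \<in> insert s (nbrs G s) - U"
        then have "y \<in> closed_nbrs G s \<inter> (verts G - U)" using VG by (auto simp: closed_nbrs_def)
        then show "y \<in> {s, l}" using cs' by blast
      qed
      show "{s, l} \<subseteq> insert s (nbrs G s) - U" using s l lns by auto
    qed
    finally show ?thesis .
  qed
  have VX: "verts X = {s}"
  proof -
    have "verts X = insert s (nbrs G s) - leaves G" using VG X_def' by simp
    then show ?thesis using nbL sL by auto
  qed
  have cH: "closed_nbrs H s = closed_nbrs H l"
  proof -
    obtain t where t: "nbrs G l = {t}" using leaf_nb l by blast
    have "(l, s) \<in> edges G" using esl gwf_symD[OF gG] by blast
    then have "t = s" using t by (auto simp: nbrs_def)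
    then have "closed_nbrs G l = {l, s}" using t by (simp add: closed_nbrs_def)
    then have "closed_nbrs H l = {l, s}" using cn_lambda_S[of l G U] l VH by auto
    then show ?thesis using cs by auto
  qed
  have "sib_class H ` verts H = {sib_class H s}"
    using VH cH sib_eq[of s H l] by auto
  then have c1: "card (verts (rho H)) = 1" by simp
  then have "leaves (rho H) = {}" by (rule card1_rho_noleaves)
  then have "lambda (rho H) = rho H" using lambda_S_empty[OF gwf_rho[OF gH]] by (simp add: lambda_def)
  then have "card (verts (lambda (rho H))) = 1" using c1 by simp
  then have left: "card (verts (rho (lambda (rho H)))) = 1" by (rule card1_rho)
  have "card (verts (rho X)) = 1" using VX card1_rho by simp
  then have "card (verts (lambda_S {} (rho X))) = 1"
    using lambda_S_empty[OF gwf_rho[OF gX]] by simp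
  then have "card (verts (rho (lambda_S {} (rho X)))) = 1" by (rule card1_rho)
  then show ?thesis using left card1_iso by blast
qed

end

lemma leaf_nbhd:
  assumes G: "gwf G" and b: "b \<in> verts G" and d: "d \<in> verts G" and bd: "(b, d) \<in> edges G"
    and all: "\<forall>y \<in> verts G. (b, y) \<in> edges G \<and> closed_nbrs G y \<noteq> closed_nbrs G b \<longrightarrow>
            closed_nbrs G y = closed_nbrs G d"
  shows "y \<in> closed_nbrs G b \<longleftrightarrow> y \<in> verts G \<and> (closed_nbrs G y = closed_nbrs G b \<or> closed_nbrs G y = closed_nbrs G d)"
proof
  assume y: "y \<in> closed_nbrs G b"
  then have yv: "y \<in> verts G" using cn_sub[OF G b] by blast
  from y have "y = b \<or> (b, y) \<in> edges G" by (simp add: mem_cn)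
  then show "y \<in> verts G \<and> (closed_nbrs G y = closed_nbrs G b \<or> closed_nbrs G y = closed_nbrs G d)"
    using all yv by blast
next
  assume y: "y \<in> verts G \<and> (closed_nbrs G y = closed_nbrs G b \<or> closed_nbrs G y = closed_nbrs G d)"
  show "y \<in> closed_nbrs G b"
  proof (cases "closed_nbrs G y = closed_nbrs G b")
    case True
    have "y \<in> closed_nbrs G y" by (simp add: mem_cn)
    then show ?thesis using True by simp
  next
    case False
    then have "closed_nbrs G y = closed_nbrs G d" using y by blast
    moreover have "b \<in> closed_nbrs G d" using bd gwf_symD[OF G] by (simp add: mem_cn)
    ultimately have "b \<in> closed_nbrs G y" by simp
    then show ?thesis using cn_sym[OF G] by blast
  qed
qed

locale nd_ctx = thm_ctx +
  assumes ND: "\<forall>s \<in> verts G - U. \<forall>l \<in> leaves G - U. s \<noteq> l \<longrightarrow> closed_nbrs (lambda_S U G) s \<noteq> {s, l}"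
begin

abbreviation "W1 \<equiv> \<Union>(leaves (rho H))"
abbreviation "Vs \<equiv> {C \<in> leaves (rho X). C \<subseteq> W1}"
abbreviation "AA \<equiv> verts H - W1"
abbreviation "Y \<equiv> lambda_S (\<Union>Vs) X"

lemma VX: "verts X = verts G - leaves G" using X_def' by simp

lemma cnHX: assumes v: "v \<in> verts X" shows "closed_nbrs X v = closed_nbrs H v \<inter> verts X"
proof -
  have "closed_nbrs X v = closed_nbrs G v \<inter> (verts G - leaves G)"
    using v X_def' cn_lambda_S[of v G "leaves G"] by simp
  moreover have "closed_nbrs H v = closed_nbrs G v \<inter> (verts G - U)"
    using v VX UL cn_lambda_S[of v G U] by auto
  ultimately show ?thesis using VX UL by auto
qed

lemma leaf_in_H: assumes l: "l \<in> leaves G - U"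
  shows "\<exists>s. nbrs G l = {s} \<and> s \<in> verts H \<and> l \<in> verts H \<and> (l, s) \<in> edges G \<and> s \<noteq> l
     \<and> s \<notin> leaves G \<and> closed_nbrs H l = {l, s}"
proof -
  obtain s where s: "nbrs G l = {s}" "s \<in> verts G" "(l, s) \<in> edges G" "s \<noteq> l" "l \<in> verts G"
    using leaf_nb l by blast
  have sL: "s \<notin> leaves G" using no_adj_leaves[OF _ _ s(3)] l by blast
  then have sH: "s \<in> verts H" using s UL by auto
  have lH: "l \<in> verts H" using l s by auto
  have "closed_nbrs G l = {l, s}" using s by (simp add: closed_nbrs_def)
  then have "closed_nbrs H l = {l, s}" using cn_lambda_S[of l G U] lH sH by auto
  then show ?thesis using s sL sH lH by blast
qed

lemma F1: assumes l: "l \<in> leaves G - U" shows "l \<in> W1"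
proof -
  obtain s where s: "nbrs G l = {s}" "s \<in> verts H" "l \<in> verts H" "(l, s) \<in> edges G" "s \<noteq> l"
     "closed_nbrs H l = {l, s}"
    using leaf_in_H[OF l] by blast
  have "closed_nbrs H s \<noteq> {s, l}" using ND s l by auto
  then have ne: "closed_nbrs H s \<noteq> closed_nbrs H l" using s by auto
  have "is_leaf (rho H) (sib_class H l)"
  proof (subst leaf_class_iff[OF gH s(3)], intro bexI conjI ballI impI)
    show "(l, s) \<in> edges H" using s by simp
    show "closed_nbrs H s \<noteq> closed_nbrs H l" by fact
    fix y assume y: "y \<in> verts H" "(l, y) \<in> edges H \<and> closed_nbrs H y \<noteq> closed_nbrs H l"
    then have "y \<in> nbrs G l" by (auto simp: nbrs_def)
    then show "closed_nbrs H y = closed_nbrs H s" using s by simp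
  qed (use s in auto)
  then have "sib_class H l \<in> leaves (rho H)" by (simp add: leaves_def)
  then show ?thesis using sib_self[OF s(3)] by blast
qed

lemma W1_leaf: assumes "b \<in> W1" shows "b \<in> verts H \<and> is_leaf (rho H) (sib_class H b)"
proof -
  from assms obtain C where C: "C \<in> leaves (rho H)" "b \<in> C" by blast
  then have "C \<in> verts (rho H)" by (simp add: leaves_def is_leaf_def)
  then obtain b0 where b0: "b0 \<in> verts H" "C = sib_class H b0" by auto
  then have bH: "b \<in> verts H" and "closed_nbrs H b = closed_nbrs H b0" using C by (auto simp: sib_mem)
  then have "sib_class H b = C" using b0 sib_eq by metis
  then show ?thesis using C bH by (simp add: leaves_def)
qed

lemma claim: assumes bY: "b \<in> verts Y - AA" shows "\<exists>a \<in> AA. closed_nbrs Y a = closed_nbrs Y b"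
proof -
  have bX: "b \<in> verts X" and bV: "b \<notin> \<Union>Vs" using bY by auto
  have bH: "b \<in> verts H" using bX VX UL by auto
  have bW: "b \<in> W1" using bY bH by auto
  have bL: "b \<notin> leaves G" using bX VX by auto
  have "is_leaf (rho H) (sib_class H b)" using W1_leaf[OF bW] by blast
  then obtain d where d: "d \<in> verts H" "(b, d) \<in> edges H" "closed_nbrs H d \<noteq> closed_nbrs H b"
    and all: "\<forall>y \<in> verts H. (b, y) \<in> edges H \<and> closed_nbrs H y \<noteq> closed_nbrs H b \<longrightarrow>
            closed_nbrs H y = closed_nbrs H d"
    using leaf_class_iff[OF gH bH] by blast
  note M = leaf_nbhd[OF gH bH d(1) d(2) all]
  have noL: "y \<notin> leaves G" if y: "y \<in> closed_nbrs H b" for y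
  proof
    assume yL: "y \<in> leaves G"
    have yH: "y \<in> verts H" using y cn_sub[OF gH bH] by blast
    then have yU: "y \<in> leaves G - U" using yL by simp
    have yb: "y \<noteq> b" using yL bL by blast
    then have eby: "(b, y) \<in> edges H" using y by (simp add: mem_cn)
    obtain s where s: "nbrs G y = {s}" "closed_nbrs H y = {y, s}" using leaf_in_H[OF yU] by blast
    have "(y, b) \<in> edges G" using eby gwf_symD[OF gG] by auto
    then have "s = b" using s(1) by (auto simp: nbrs_def)
    with s have cy: "closed_nbrs H y = {y, b}" by simp
    have ndb: "closed_nbrs H b \<noteq> {b, y}" using ND bH yU yb by auto
    then have "closed_nbrs H y \<noteq> closed_nbrs H b" using cy by auto
    then have cyd: "closed_nbrs H y = closed_nbrs H d" using all yH eby by blast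
    have "closed_nbrs H b = {b, y}"
    proof (intro set_eqI iffI)
      fix z assume z: "z \<in> closed_nbrs H b"
      then have zH: "z \<in> verts H" and zc: "closed_nbrs H z = closed_nbrs H b \<or> closed_nbrs H z = closed_nbrs H d"
        using M by blast+
      show "z \<in> {b, y}"
      proof (cases "closed_nbrs H z = closed_nbrs H d")
        case True
        have "z \<in> closed_nbrs H z" by (simp add: mem_cn)
        then show ?thesis using True cyd cy by auto
      next
        case False
        then have "closed_nbrs H z = closed_nbrs H b" using zc by blast
        then have "y \<in> closed_nbrs H z" using y by simp
        then have "y = z \<or> (z, y) \<in> edges G" by (auto simp: mem_cn)
        then have "y = z \<or> z \<in> nbrs G y" using gwf_symD[OF gG] by (auto simp: nbrs_def)
        then show ?thesis using s(1) \<open>s = b\<close> by auto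
      qed
    next
      fix z assume "z \<in> {b, y}" then show "z \<in> closed_nbrs H b" using y by (auto simp: mem_cn)
    qed
    then show False using ndb by simp
  qed
  have cbX_sub: "closed_nbrs H b \<subseteq> verts X"
  proof
    fix y assume y: "y \<in> closed_nbrs H b"
    then have "y \<in> verts H" using cn_sub[OF gH bH] by blast
    then show "y \<in> verts X" using noL[OF y] VX by auto
  qed
  have cbX: "closed_nbrs X b = closed_nbrs H b" using cnHX[OF bX] cbX_sub by blast
  have dcb: "d \<in> closed_nbrs H b" using d(2) by (simp add: mem_cn)
  have dX: "d \<in> verts X" using dcb cbX_sub by blast
  have cdX: "closed_nbrs X d = closed_nbrs H d \<inter> verts X" by (rule cnHX[OF dX])
  show ?thesis
  proof (cases "closed_nbrs X d = closed_nbrs X b")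
    case True
    have dW: "d \<notin> W1"
    proof
      assume "d \<in> W1"
      then have "is_leaf (rho H) (sib_class H d)" using W1_leaf by blast
      then obtain d' where d': "d' \<in> verts H" "(d, d') \<in> edges H" "closed_nbrs H d' \<noteq> closed_nbrs H d"
        and all': "\<forall>y \<in> verts H. (d, y) \<in> edges H \<and> closed_nbrs H y \<noteq> closed_nbrs H d \<longrightarrow>
            closed_nbrs H y = closed_nbrs H d'"
        using leaf_class_iff[OF gH d(1)] by blast
      note M' = leaf_nbhd[OF gH d(1) d'(1) d'(2) all']
      have "(d, b) \<in> edges H" using d(2) gwf_symD[OF gH] by blast
      then have "closed_nbrs H b = closed_nbrs H d'" using all' bH d(3) by simp
      then have "y \<in> closed_nbrs H d \<longleftrightarrow> y \<in> closed_nbrs H b" for y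
        using M[of y] M'[of y] by auto
      then have "closed_nbrs H d = closed_nbrs H b" by blast
      then show False using d(3) by simp
    qed
    have dV: "d \<notin> \<Union>Vs" using dW by blast
    have dA: "d \<in> AA" using d(1) dW by blast
    have dY: "d \<in> verts Y" using dX dV by simp
    have bY': "b \<in> verts Y" using bX bV by simp
    have "closed_nbrs Y d = closed_nbrs X d \<inter> verts Y" using cn_lambda_S[of d X "\<Union>Vs"] dY by simp
    also have "\<dots> = closed_nbrs X b \<inter> verts Y" using True by simp
    also have "\<dots> = closed_nbrs Y b" using cn_lambda_S[of b X "\<Union>Vs"] bY' by simp
    finally show ?thesis using dA by blast
  next
    case False
    have sub: "sib_class X b \<subseteq> W1"
    proof
      fix y assume y: "y \<in> sib_class X b"
      then have yX: "y \<in> verts X" and cy: "closed_nbrs X y = closed_nbrs X b" by (auto simp: sib_mem)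
      have "y \<in> closed_nbrs X y" by (simp add: mem_cn)
      then have ycb: "y \<in> closed_nbrs H b" using cy cbX by simp
      then have yH: "y \<in> verts H" and
        yc: "closed_nbrs H y = closed_nbrs H b \<or> closed_nbrs H y = closed_nbrs H d" using M by blast+
      have "closed_nbrs H y \<noteq> closed_nbrs H d"
      proof
        assume "closed_nbrs H y = closed_nbrs H d"
        then have "closed_nbrs X y = closed_nbrs X d" using cnHX[OF yX] cdX by simp
        then show False using cy False by simp
      qed
      then have "closed_nbrs H y = closed_nbrs H b" using yc by blast
      then have "sib_class H y = sib_class H b" using sib_eq yH by metis
      then have "is_leaf (rho H) (sib_class H y)" using W1_leaf[OF bW] by simp
      then have "sib_class H y \<in> leaves (rho H)" by (simp add: leaves_def)
      then show "y \<in> W1" using sib_self[OF yH] by blast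
    qed
    have "is_leaf (rho X) (sib_class X b)"
    proof (subst leaf_class_iff[OF gX bX], intro bexI conjI ballI impI)
      show "(b, d) \<in> edges X" using d(2) bX dX X_def' by simp
      show "closed_nbrs X d \<noteq> closed_nbrs X b" by fact
      show "d \<in> verts X" by fact
      fix y assume y: "y \<in> verts X" "(b, y) \<in> edges X \<and> closed_nbrs X y \<noteq> closed_nbrs X b"
      have yH: "y \<in> verts H" using y(1) VX UL by auto
      have "(b, y) \<in> edges H" using y bH yH X_def' by auto
      then have "y \<in> closed_nbrs H b" by (simp add: mem_cn)
      then have yc: "closed_nbrs H y = closed_nbrs H b \<or> closed_nbrs H y = closed_nbrs H d" using M by blast
      show "closed_nbrs X y = closed_nbrs X d"
      proof (cases "closed_nbrs H y = closed_nbrs H b")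
        case True
        then have "closed_nbrs X y = closed_nbrs X b" using cnHX[OF y(1)] cnHX[OF bX] by simp
        then show ?thesis using y by simp
      next
        case False
        then have "closed_nbrs H y = closed_nbrs H d" using yc by blast
        then show ?thesis using cnHX[OF y(1)] cdX by simp
      qed
    qed
    then have "sib_class X b \<in> Vs" using sub by (simp add: leaves_def)
    then have "b \<in> \<Union>Vs" using sib_self[OF bX] by blast
    then show ?thesis using bV by simp
  qed
qed

lemma nd_main: "graph_iso (rho (lambda (rho H))) (rho (lambda_S Vs (rho X)))"
proof -
  have s1: "graph_iso (rho (lambda (rho H))) (rho (lambda_S W1 H))"
    unfolding lambda_def by (rule rho_proj[OF gH]) (auto simp: leaves_def is_leaf_def)
  have s2: "graph_iso (rho (lambda_S Vs (rho X))) (rho Y)"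
    by (rule rho_proj[OF gX]) (auto simp: leaves_def is_leaf_def)
  have AsubB: "AA \<subseteq> verts Y"
  proof
    fix a assume a: "a \<in> AA"
    then have "a \<notin> leaves G" using F1 by auto
    moreover have "a \<notin> \<Union>Vs" using a by blast
    ultimately show "a \<in> verts Y" using a VX by auto
  qed
  have gY: "gwf Y" using gX by (rule gwf_lambda_S)
  have s3: "graph_iso (rho Y) (rho (AA, edges Y \<inter> AA \<times> AA))"
    using rho_retract[OF gY AsubB] claim by blast
  have VYX: "verts Y \<subseteq> verts X" by auto
  have eqA: "lambda_S W1 H = (AA, edges Y \<inter> AA \<times> AA)"
  proof -
    have "edges H \<inter> (AA \<times> AA) = edges Y \<inter> AA \<times> AA"
      using AsubB VYX X_def' by auto
    then show ?thesis by (simp add: lambda_S_def[of W1 H])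
  qed
  show ?thesis using graph_iso_trans[OF s1[unfolded eqA] graph_iso_sym[OF s3]] graph_iso_sym[OF s2]
    by (rule graph_iso_trans)
qed

end

theorem theorem5p1:
  fixes G :: "'a graph" and U :: "'a set"
  assumes "simple_graph G" and "connected_graph G" and "\<not> is_K2 G"
    and "U \<subseteq> leaves G"
  shows "\<exists>V. V \<subseteq> leaves (rho (lambda G)) \<and>
           graph_iso (rho (lambda (rho (lambda_S U G))))
                     (rho (lambda_S V (rho (lambda G))))"
proof -
  interpret thm_ctx G U using assms by unfold_locales
  show ?thesis
  proof (cases "\<exists>s \<in> verts G - U. \<exists>l \<in> leaves G - U. s \<noteq> l \<and> closed_nbrs (lambda_S U G) s = {s, l}")
    case True
    then obtain s l where "s \<in> verts G - U" "l \<in> leaves G - U" "s \<noteq> l" "closed_nbrs (lambda_S U G) s = {s, l}"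
      by blast
    then have "graph_iso (rho (lambda (rho H))) (rho (lambda_S {} (rho X)))" by (rule degenerate)
    then show ?thesis by (intro exI[of _ "{}"] conjI) simp_all
  next
    case False
    have ax: "nd_ctx_axioms G U" unfolding nd_ctx_axioms_def using False by blast
    have "nd_ctx G U" by (rule nd_ctx.intro[OF thm_ctx_axioms ax])
    then interpret nd_ctx G U .
    show ?thesis by (rule exI[of _ Vs], rule conjI, blast, rule nd_main)
  qed
qed

end
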